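(* Let $k,m,n\in\mathbb{N}$ with $n=k>m=1$, and let $b,c\in\mathbb{R}$ with $b\neq\pm1$. Let $$q(z)=bz^k+\overline{z}^n+c\,\overline{z}^m+z=\big(bz^k+z\big)+\overline{\big(z^n+cz^m\big)},$$ with dilatation function $$\omega(z)=\frac{(z^n+cz^m)'}{(bz^k+z)'}=\frac{nz^{n-1}+cmz^{m-1}}{bkz^{k-1}+1}.$$ Let $z$ be a point at which $\omega(z)$ is defined and such that $z^k\overline{z}$ is a pure imaginary number. Then $|\omega(z)|=1$ if and only if $$|z|=\left(\frac{1}{k}\right)^{\frac{1}{k-1}}\left(\frac{c^2-1}{b^2-1}\right)^{\frac{1}{2k-2}}.$$
   Context: $\overline{z}$ denotes the complex conjugate of $z$. For a harmonic polynomial $f=h+\overline{g}$ with $h,g$ analytic, its dilatation is $\omega=g'/h'$, defined where $h'\neq 0$. *)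

theory Defs
  imports "HOL-Analysis.Analysis"
begin

text \<open>Dilatation of the harmonic function f = h + conj g (h, g analytic):
  omega = g' / h', meaningful where h' is nonzero.\<close>
definition dilatation :: "(complex \<Rightarrow> complex) \<Rightarrow> (complex \<Rightarrow> complex) \<Rightarrow> complex \<Rightarrow> complex" where
  "dilatation h g z = deriv g z / deriv h z"

end

theory Submission
  imports Defs
begin

lemma root_lemma:
  fixes t r :: real and N :: nat
  assumes "t \<ge> 0" "N > 0" "r \<ge> 0"
  shows "t ^ N = r \<longleftrightarrow> t = r powr (1 / real N)"
proof (cases "t = 0")
  case True
  then show ?thesis using assms by auto
next
  case False
  then have tp: "t > 0" using assms by simp
  have "t ^ N = t powr real N" using tp by (simp add: powr_realpow)
  moreover have "(t powr real N) powr (1 / real N) = t" using assms tp by (simp add: powr_powr)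
  moreover have "(r powr (1 / real N)) powr real N = r" using assms by (simp add: powr_powr)
  ultimately show ?thesis using tp by (metis powr_ge_zero powr_realpow)
qed

theorem theorem3p8:
  fixes k m n :: nat and b c :: real and z :: complex
  assumes "n = k" and "k > m" and "m = 1"
    and "b \<noteq> 1" and "b \<noteq> -1"
    and "deriv (\<lambda>w. complex_of_real b * w ^ k + w) z \<noteq> 0"
    and "Re (z ^ k * cnj z) = 0"
  shows "cmod (dilatation (\<lambda>w. complex_of_real b * w ^ k + w)
                          (\<lambda>w. w ^ n + complex_of_real c * w ^ m) z) = 1
     \<longleftrightarrow> ((c\<^sup>2 - 1) / (b\<^sup>2 - 1) \<ge> 0 \<and>
          cmod z = (1 / real k) powr (1 / (real k - 1))
                   * ((c\<^sup>2 - 1) / (b\<^sup>2 - 1)) powr (1 / (2 * real k - 2)))"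
proof -
  have k2: "k \<ge> 2" using assms by simp
  have dh: "deriv (\<lambda>w. complex_of_real b * w ^ k + w) z = of_real b * (of_nat k * z^(k-1)) + 1"
    by (rule DERIV_imp_deriv) (auto intro!: derivative_eq_intros)
  have dg: "deriv (\<lambda>w. w ^ n + complex_of_real c * w ^ m) z = of_nat k * z^(k-1) + of_real c"
    using assms by (intro DERIV_imp_deriv) (auto intro!: derivative_eq_intros)
  define u where "u = of_nat k * z^(k-1)"
  have reu: "Re u = 0"
  proof (cases "z = 0")
    case True then show ?thesis using k2 by (simp add: u_def)
  next
    case False
    obtain j where kj: "k = Suc j" using k2 by (cases k) auto
    have "z ^ k * cnj z = z^(k-1) * (z * cnj z)" by (simp add: kj mult_ac)
    also have "z * cnj z = of_real ((cmod z)^2)" by (rule complex_norm_square[symmetric])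
    finally have "z ^ k * cnj z = z^(k-1) * of_real ((cmod z)^2)" .
    then have "Re (z^(k-1)) * (cmod z)^2 = 0" using assms(7) by simp
    then have "Re (z^(k-1)) = 0" using False by simp
    then show ?thesis by (simp add: u_def)
  qed
  define y where "y = Im u"
  have uy: "u = \<i> * of_real y" using reu by (simp add: y_def complex_eq_iff)
  define r where "r = (c\<^sup>2 - 1) / (b\<^sup>2 - 1)"
  have b21: "b\<^sup>2 - 1 \<noteq> 0" using assms(4,5) by (simp add: power2_eq_1_iff)
  have den: "of_real b * u + 1 \<noteq> 0" using assms(6) dh by (simp add: u_def)
  have "cmod (dilatation (\<lambda>w. complex_of_real b * w ^ k + w)
                          (\<lambda>w. w ^ n + complex_of_real c * w ^ m) z) = 1
        \<longleftrightarrow> cmod (u + of_real c) = cmod (of_real b * u + 1)"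
  proof -
    have "dilatation (\<lambda>w. complex_of_real b * w ^ k + w)
                          (\<lambda>w. w ^ n + complex_of_real c * w ^ m) z = (u + of_real c) / (of_real b * u + 1)"
      unfolding dilatation_def dh dg u_def by simp
    moreover have "cmod (of_real b * u + 1) > 0" using den by simp
    ultimately show ?thesis by (auto simp add: norm_divide divide_eq_1_iff)
  qed
  also have "\<dots> \<longleftrightarrow> (cmod (u + of_real c))\<^sup>2 = (cmod (of_real b * u + 1))\<^sup>2"
    by (simp add: power2_eq_iff_nonneg)
  also have "\<dots> \<longleftrightarrow> c\<^sup>2 + y\<^sup>2 = 1 + b\<^sup>2 * y\<^sup>2"
  proof -
    have "(cmod (u + of_real c))\<^sup>2 = c\<^sup>2 + y\<^sup>2" by (simp add: uy cmod_power2)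
    moreover have "(cmod (of_real b * u + 1))\<^sup>2 = 1 + b\<^sup>2 * y\<^sup>2"
      by (simp add: uy cmod_power2 power_mult_distrib)
    ultimately show ?thesis by simp
  qed
  also have "\<dots> \<longleftrightarrow> y\<^sup>2 = r"
  proof -
    have "c\<^sup>2 + y\<^sup>2 = 1 + b\<^sup>2 * y\<^sup>2 \<longleftrightarrow> y\<^sup>2 * (b\<^sup>2 - 1) = c\<^sup>2 - 1"
      by (auto simp: algebra_simps)
    also have "\<dots> \<longleftrightarrow> y\<^sup>2 = r" unfolding r_def using b21 by (simp add: eq_divide_eq)
    finally show ?thesis .
  qed
  also have "y\<^sup>2 = (real k)\<^sup>2 * (cmod z) ^ (2*k-2)"
  proof -
    have "y\<^sup>2 = (cmod u)\<^sup>2" by (simp add: uy norm_mult)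
    also have "\<dots> = (real k)\<^sup>2 * (cmod z) ^ (2*k-2)"
    proof -
      have "cmod u = real k * cmod z ^ (k-1)" by (simp add: u_def norm_mult norm_power)
      then have "(cmod u)\<^sup>2 = (real k)\<^sup>2 * (cmod z ^ (k-1))\<^sup>2" by (simp add: power_mult_distrib)
      also have "(cmod z ^ (k-1))\<^sup>2 = cmod z ^ ((k-1)*2)" by (simp add: power_mult)
      also have "(k-1)*2 = 2*k-2" by simp
      finally show ?thesis .
    qed
    finally show ?thesis .
  qed
  also have "(real k)\<^sup>2 * (cmod z) ^ (2*k-2) = r \<longleftrightarrow> (cmod z) ^ (2*k-2) = r / (real k)\<^sup>2"
    using k2 by (auto simp: field_simps)
  also have "\<dots> \<longleftrightarrow> r \<ge> 0 \<and> cmod z = (r / (real k)\<^sup>2) powr (1 / real (2*k-2))"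
  proof (cases "r \<ge> 0")
    case True
    then show ?thesis using root_lemma[of "cmod z" "2*k-2" "r / (real k)\<^sup>2"] k2 by simp
  next
    case False
    have "(cmod z) ^ (2*k-2) \<ge> 0" by simp
    moreover have "r / (real k)\<^sup>2 < 0" using False k2 by (simp add: divide_neg_pos)
    ultimately show ?thesis using False by (metis not_le)
  qed
  also have "(r / (real k)\<^sup>2) powr (1 / real (2*k-2))
       = (1 / real k) powr (1 / (real k - 1)) * r powr (1 / (2 * real k - 2))" if "r \<ge> 0"
  proof -
    have e: "real (2*k-2) = 2 * real k - 2" using k2 by simp
    have "(r / (real k)\<^sup>2) powr (1 / real (2*k-2)) = (1 / (real k)\<^sup>2) powr (1 / (2 * real k - 2)) * r powr (1 / (2 * real k - 2))"
      using that k2 by (simp add: e powr_mult[symmetric])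
    also have "(1 / (real k)\<^sup>2) powr (1 / (2 * real k - 2)) = (1 / real k) powr (1 / (real k - 1))"
    proof -
      have e1: "(1 / (real k)\<^sup>2) = (1 / real k) powr 2" using k2 by (simp add: powr_realpow power_divide)
      have "(1 / (real k)\<^sup>2) powr (1 / (2 * real k - 2)) = ((1 / real k) powr 2) powr (1 / (2 * real k - 2))"
        by (simp only: e1)
      also have "\<dots> = (1 / real k) powr (2 * (1 / (2 * real k - 2)))"
        by (rule powr_powr)
      also have "2 * (1 / (2 * real k - 2)) = 1 / (real k - 1)" using k2 by (simp add: field_simps)
      finally show ?thesis .
    qed
    finally show ?thesis .
  qed
  ultimately show ?thesis unfolding r_def by auto
qed

end
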